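(* Let $G_1$ and $G_2$ be two connected graphs, each of diameter at most two. Then $\chi_L(G_1+G_2)=\chi_L(G_1)+\chi_L(G_2)$.
   Context: All graphs are finite, simple (no loops or multiple edges). A proper $k$-coloring of $G$ is a map $f$ from $V(G)$ onto $[k]=\{1,\dots,k\}$ such that adjacent vertices receive different colors. For a connected graph $G$ with proper $k$-coloring $f$, let $V_i=f^{-1}(i)$ and $\Pi=(V_1,\dots,V_k)$; the color code of a vertex $v$ is $c_\Pi(v)=(d(v,V_1),\dots,d(v,V_k))$, where $d(v,S)=\min_{x\in S} d(v,x)$. The coloring $f$ is a locating coloring if distinct vertices have distinct color codes; the locating chromatic number $\chi_L(G)$ is the minimum number of colors in a locating coloring of $G$. The join $G_1+G_2$ is the graph on $V(G_1)\cup V(G_2)$ (disjoint) with edge set $E(G_1)\cup E(G_2)\cup\{uv: u\in V(G_1), v\in V(G_2)\}$. *)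

theory Defs
  imports Main
begin

record 'a graph =
  verts :: "'a set"
  adj :: "'a \<Rightarrow> 'a \<Rightarrow> bool"

definition simple_graph :: "'a graph \<Rightarrow> bool" where
  "simple_graph G \<longleftrightarrow> finite (verts G)
     \<and> (\<forall>u v. adj G u v \<longrightarrow> u \<in> verts G \<and> v \<in> verts G)
     \<and> (\<forall>u v. adj G u v \<longrightarrow> adj G v u)
     \<and> (\<forall>u. \<not> adj G u u)"

definition walk :: "'a graph \<Rightarrow> 'a list \<Rightarrow> bool" where
  "walk G xs \<longleftrightarrow> xs \<noteq> [] \<and> set xs \<subseteq> verts G
     \<and> (\<forall>i. Suc i < length xs \<longrightarrow> adj G (xs ! i) (xs ! Suc i))"

definition connected_graph :: "'a graph \<Rightarrow> bool" where
  "connected_graph G \<longleftrightarrow> verts G \<noteq> {}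
     \<and> (\<forall>u\<in>verts G. \<forall>v\<in>verts G. \<exists>xs. walk G xs \<and> hd xs = u \<and> last xs = v)"

text \<open>Distance: length (number of edges) of a shortest walk.\<close>
definition gdist :: "'a graph \<Rightarrow> 'a \<Rightarrow> 'a \<Rightarrow> nat" where
  "gdist G u v = (LEAST n. \<exists>xs. walk G xs \<and> hd xs = u \<and> last xs = v \<and> length xs = Suc n)"

definition diameter :: "'a graph \<Rightarrow> nat" where
  "diameter G = Max {gdist G u v | u v. u \<in> verts G \<and> v \<in> verts G}"

definition set_dist :: "'a graph \<Rightarrow> 'a \<Rightarrow> 'a set \<Rightarrow> nat" where
  "set_dist G v S = Min ((\<lambda>x. gdist G v x) ` S)"

definition proper_coloring :: "'a graph \<Rightarrow> nat \<Rightarrow> ('a \<Rightarrow> nat) \<Rightarrow> bool" where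
  "proper_coloring G k f \<longleftrightarrow> f ` verts G = {1..k}
     \<and> (\<forall>u\<in>verts G. \<forall>v\<in>verts G. adj G u v \<longrightarrow> f u \<noteq> f v)"

definition color_class :: "'a graph \<Rightarrow> ('a \<Rightarrow> nat) \<Rightarrow> nat \<Rightarrow> 'a set" where
  "color_class G f i = {x \<in> verts G. f x = i}"

definition color_code :: "'a graph \<Rightarrow> nat \<Rightarrow> ('a \<Rightarrow> nat) \<Rightarrow> 'a \<Rightarrow> nat list" where
  "color_code G k f v = map (\<lambda>i. set_dist G v (color_class G f i)) [1..<Suc k]"

definition locating_coloring :: "'a graph \<Rightarrow> nat \<Rightarrow> ('a \<Rightarrow> nat) \<Rightarrow> bool" where
  "locating_coloring G k f \<longleftrightarrow> proper_coloring G k f \<and> inj_on (color_code G k f) (verts G)"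

definition locating_chromatic_number :: "'a graph \<Rightarrow> nat" where
  "locating_chromatic_number G = (LEAST k. \<exists>f. locating_coloring G k f)"

definition graph_join :: "'a graph \<Rightarrow> 'b graph \<Rightarrow> ('a + 'b) graph" where
  "graph_join G1 G2 = \<lparr> verts = verts G1 <+> verts G2,
     adj = (\<lambda>x y. case (x, y) of
              (Inl a, Inl b) \<Rightarrow> adj G1 a b
            | (Inr a, Inr b) \<Rightarrow> adj G2 a b
            | (Inl a, Inr b) \<Rightarrow> a \<in> verts G1 \<and> b \<in> verts G2
            | (Inr a, Inl b) \<Rightarrow> a \<in> verts G2 \<and> b \<in> verts G1) \<rparr>"

end

theory Submission
  imports Defs
begin

definition dd :: "'a graph \<Rightarrow> 'a \<Rightarrow> 'a \<Rightarrow> nat" where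
  "dd G u v = (if u = v then 0 else if adj G u v then 1 else 2)"

lemma walk1: "u \<in> verts G \<Longrightarrow> walk G [u]"
  by (simp add: walk_def)

lemma walk2: "walk G [u,v] \<longleftrightarrow> u \<in> verts G \<and> v \<in> verts G \<and> adj G u v"
  unfolding walk_def by (auto simp: less_Suc_eq)

lemma walk3: "u \<in> verts G \<Longrightarrow> w \<in> verts G \<Longrightarrow> v \<in> verts G \<Longrightarrow> adj G u w \<Longrightarrow> adj G w v
   \<Longrightarrow> walk G [u,w,v]"
  unfolding walk_def by (auto simp: less_Suc_eq)

lemma len2_list: "length xs = 2 \<Longrightarrow> xs = [hd xs, last xs]"
  by (cases xs; cases "tl xs") auto

lemma len1_list: "length xs = 1 \<Longrightarrow> hd xs = last xs"
  by (cases xs) auto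

lemma gdist_dd:
  assumes u: "u \<in> verts G" and v: "v \<in> verts G" and w: "walk G xs" "hd xs = u" "last xs = v"
    and l: "length xs \<le> 3"
  shows "gdist G u v = dd G u v"
proof -
  define P where "P = (\<lambda>n. \<exists>xs. walk G xs \<and> hd xs = u \<and> last xs = v \<and> length xs = Suc n)"
  have g: "gdist G u v = Least P" unfolding gdist_def P_def by simp
  have no0: "\<not> P 0" if "u \<noteq> v" using that len1_list unfolding P_def by fastforce
  have no1: "\<not> P 1" if "\<not> adj G u v"
  proof
    assume "P 1"
    then obtain ys where ys: "walk G ys" "hd ys = u" "last ys = v" "length ys = 2"
      unfolding P_def by auto
    then have "ys = [u,v]" using len2_list by metis
    with ys walk2 show False using that by metis
  qed
  show ?thesis
  proof (cases "u = v")
    case True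
    have "P 0" unfolding P_def using walk1[OF u] True by (intro exI[of _ "[u]"]) auto
    then show ?thesis using g True by (simp add: dd_def)
  next
    case False
    show ?thesis
    proof (cases "adj G u v")
      case True
      have "P 1" unfolding P_def using walk2[of G u v] u v True
        by (intro exI[of _ "[u,v]"]) auto
      then have "Least P = 1" using no0[OF False]
        by (intro Least_equality, simp) (metis One_nat_def Suc_leI gr0I)
      then show ?thesis using g False True by (simp add: dd_def)
    next
      case nadj: False
      have "xs \<noteq> []" using w by (simp add: walk_def)
      then have "length xs \<noteq> 0" by simp
      moreover have "length xs \<noteq> 1" using len1_list w False by metis
      moreover have "length xs \<noteq> 2"
      proof
        assume "length xs = 2"
        then have "xs = [u,v]" using len2_list w by metis
        with w nadj walk2 show False by metis
      qed
      ultimately have "length xs = 3" using l by linarith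
      then have "P 2" unfolding P_def using w by auto
      then have "Least P = 2" using no0[OF False] no1[OF nadj]
        apply (intro Least_equality, simp)
        by (metis One_nat_def less_2_cases not_le)
      then show ?thesis using g False nadj by (simp add: dd_def)
    qed
  qed
qed

lemma set_dist_self:
  "finite S \<Longrightarrow> v \<in> S \<Longrightarrow> gdist G v v = 0 \<Longrightarrow> set_dist G v S = 0"
  unfolding set_dist_def by (metis Min_le finite_imageI image_eqI le_zero_eq)

lemma code_eq:
  "color_code G k f x = color_code G k f y \<longleftrightarrow>
     (\<forall>i\<in>{1..k}. set_dist G x (color_class G f i) = set_dist G y (color_class G f i))"
  unfolding color_code_def map_eq_conv set_upt atLeastLessThanSuc_atLeastAtMost by (rule refl)

lemma exists_loc:
  assumes fin: "finite (verts G)" and irr: "\<forall>u. \<not> adj G u u"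
    and z: "\<forall>u\<in>verts G. \<forall>v\<in>verts G. gdist G u v = 0 \<longleftrightarrow> u = v"
  shows "\<exists>k f. locating_coloring G k f"
proof -
  obtain h where h: "bij_betw h (verts G) {0..<card (verts G)}"
    using ex_bij_betw_finite_nat[OF fin] by blast
  define g where "g = (\<lambda>v. Suc (h v))"
  have inj: "inj_on g (verts G)" using h unfolding g_def bij_betw_def inj_on_def by auto
  have img: "g ` verts G = {1..card (verts G)}"
  proof -
    have "g ` verts G = Suc ` (h ` verts G)" unfolding g_def by auto
    also have "\<dots> = {1..card (verts G)}" using h
      by (simp add: bij_betw_def atLeastLessThanSuc_atLeastAtMost)
    finally show ?thesis .
  qed
  have pr: "proper_coloring G (card (verts G)) g"
    unfolding proper_coloring_def using img inj irr by (metis inj_onD)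
  have cc: "color_class G g (g v) = {v}" if "v \<in> verts G" for v
    using inj that unfolding color_class_def inj_on_def by auto
  have "inj_on (color_code G (card (verts G)) g) (verts G)"
  proof (rule inj_onI)
    fix u v assume u: "u \<in> verts G" and v: "v \<in> verts G"
      and e: "color_code G (card (verts G)) g u = color_code G (card (verts G)) g v"
    have "g u \<in> {1..card (verts G)}" using img u by blast
    then have "set_dist G u (color_class G g (g u)) = set_dist G v (color_class G g (g u))"
      using e code_eq by metis
    then have "gdist G u u = gdist G v u" using cc[OF u] by (simp add: set_dist_def)
    then show "u = v" using z u v by metis
  qed
  then show ?thesis using pr unfolding locating_coloring_def by blast
qed


locale jn =
  fixes G1 :: "'a graph" and G2 :: "'b graph"
  assumes s1: "simple_graph G1" and s2: "simple_graph G2"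
    and c1: "connected_graph G1" and c2: "connected_graph G2"
    and dia1: "diameter G1 \<le> 2" and dia2: "diameter G2 \<le> 2"
begin

abbreviation "J \<equiv> graph_join G1 G2"

lemma vJ: "verts J = Inl ` verts G1 \<union> Inr ` verts G2"
  by (simp add: graph_join_def Plus_def)

lemma adjJ[simp]:
  "adj J (Inl a) (Inl b) = adj G1 a b"
  "adj J (Inr c) (Inr d) = adj G2 c d"
  "adj J (Inl a) (Inr c) = (a \<in> verts G1 \<and> c \<in> verts G2)"
  "adj J (Inr c) (Inl a) = (c \<in> verts G2 \<and> a \<in> verts G1)"
  by (simp_all add: graph_join_def)

lemma ne1: "verts G1 \<noteq> {}" using c1 by (simp add: connected_graph_def)
lemma ne2: "verts G2 \<noteq> {}" using c2 by (simp add: connected_graph_def)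
lemma fin1: "finite (verts G1)" using s1 by (simp add: simple_graph_def)
lemma fin2: "finite (verts G2)" using s2 by (simp add: simple_graph_def)

lemma short_walk:
  fixes G :: "'c graph"
  assumes s: "simple_graph G" and c: "connected_graph G" and d: "diameter G \<le> 2"
    and u: "u \<in> verts G" and v: "v \<in> verts G"
  shows "gdist G u v = dd G u v"
proof -
  have fin: "finite {gdist G u v | u v. u \<in> verts G \<and> v \<in> verts G}"
  proof -
    have "{gdist G u v | u v. u \<in> verts G \<and> v \<in> verts G} = (\<lambda>(u,v). gdist G u v) ` (verts G \<times> verts G)"
      by auto
    then show ?thesis using s by (simp add: simple_graph_def)
  qed
  have "gdist G u v \<le> diameter G" unfolding diameter_def
    using u v by (intro Max_ge[OF fin]) blast
  then have le: "gdist G u v \<le> 2" using d by simp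
  have "\<exists>n xs. walk G xs \<and> hd xs = u \<and> last xs = v \<and> length xs = Suc n"
  proof -
    obtain xs where xs: "walk G xs" "hd xs = u" "last xs = v"
      using c u v unfolding connected_graph_def by blast
    then have "length xs = Suc (length xs - 1)" by (cases xs) (auto simp: walk_def)
    then show ?thesis using xs by blast
  qed
  then have "\<exists>xs. walk G xs \<and> hd xs = u \<and> last xs = v \<and> length xs = Suc (gdist G u v)"
    unfolding gdist_def by (rule LeastI_ex)
  then obtain xs where "walk G xs" "hd xs = u" "last xs = v" "length xs \<le> 3"
    using le by fastforce
  then show ?thesis using gdist_dd u v by metis
qed

lemma gd1: "u \<in> verts G1 \<Longrightarrow> v \<in> verts G1 \<Longrightarrow> gdist G1 u v = dd G1 u v"
  using short_walk[OF s1 c1 dia1] .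
lemma gd2: "u \<in> verts G2 \<Longrightarrow> v \<in> verts G2 \<Longrightarrow> gdist G2 u v = dd G2 u v"
  using short_walk[OF s2 c2 dia2] .

lemma gdJ: assumes x: "x \<in> verts J" and y: "y \<in> verts J" shows "gdist J x y = dd J x y"
proof -
  obtain a where a: "a \<in> verts G1" using ne1 by blast
  obtain b where b: "b \<in> verts G2" using ne2 by blast
  have "\<exists>xs. walk J xs \<and> hd xs = x \<and> last xs = y \<and> length xs \<le> 3"
  proof (cases x)
    case (Inl p) note xp = this
    then have p: "p \<in> verts G1" using x vJ by auto
    show ?thesis
    proof (cases y)
      case (Inl q)
      then have q: "q \<in> verts G1" using y vJ by auto
      have "walk J [Inl p, Inr b, Inl q]" using p q b by (intro walk3) (auto simp: vJ)
      then show ?thesis using xp Inl by (intro exI[of _ "[Inl p, Inr b, Inl q]"]) auto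
    next
      case (Inr q)
      then have q: "q \<in> verts G2" using y vJ by auto
      have "walk J [Inl p, Inr q]" using p q by (simp add: walk2 vJ)
      then show ?thesis using xp Inr by (intro exI[of _ "[Inl p, Inr q]"]) auto
    qed
  next
    case (Inr p) note xp = this
    then have p: "p \<in> verts G2" using x vJ by auto
    show ?thesis
    proof (cases y)
      case (Inl q)
      then have q: "q \<in> verts G1" using y vJ by auto
      have "walk J [Inr p, Inl q]" using p q by (simp add: walk2 vJ)
      then show ?thesis using xp Inl by (intro exI[of _ "[Inr p, Inl q]"]) auto
    next
      case (Inr q)
      then have q: "q \<in> verts G2" using y vJ by auto
      have "walk J [Inr p, Inl a, Inr q]" using p q a by (intro walk3) (auto simp: vJ)
      then show ?thesis using xp Inr by (intro exI[of _ "[Inr p, Inl a, Inr q]"]) auto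
    qed
  qed
  then show ?thesis using gdist_dd x y by metis
qed

lemma gJ_ll: "a \<in> verts G1 \<Longrightarrow> b \<in> verts G1 \<Longrightarrow> gdist J (Inl a) (Inl b) = gdist G1 a b"
  by (simp add: gd1 gdJ vJ dd_def)
lemma gJ_rr: "a \<in> verts G2 \<Longrightarrow> b \<in> verts G2 \<Longrightarrow> gdist J (Inr a) (Inr b) = gdist G2 a b"
  by (simp add: gd2 gdJ vJ dd_def)
lemma gJ_lr: "a \<in> verts G1 \<Longrightarrow> b \<in> verts G2 \<Longrightarrow> gdist J (Inl a) (Inr b) = 1"
  by (simp add: gdJ vJ dd_def)
lemma gJ_rl: "a \<in> verts G2 \<Longrightarrow> b \<in> verts G1 \<Longrightarrow> gdist J (Inr a) (Inl b) = 1"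
  by (simp add: gdJ vJ dd_def)

lemma sd_ll: "S \<subseteq> verts G1 \<Longrightarrow> a \<in> verts G1 \<Longrightarrow> set_dist J (Inl a) (Inl ` S) = set_dist G1 a S"
  unfolding set_dist_def image_image
  by (rule arg_cong[where f=Min], rule image_cong) (auto simp: gJ_ll)
lemma sd_rr: "S \<subseteq> verts G2 \<Longrightarrow> a \<in> verts G2 \<Longrightarrow> set_dist J (Inr a) (Inr ` S) = set_dist G2 a S"
  unfolding set_dist_def image_image
  by (rule arg_cong[where f=Min], rule image_cong) (auto simp: gJ_rr)
lemma sd_lr: "S \<subseteq> verts G2 \<Longrightarrow> S \<noteq> {} \<Longrightarrow> a \<in> verts G1 \<Longrightarrow> set_dist J (Inl a) (Inr ` S) = 1"
proof -
  assume "S \<subseteq> verts G2" "S \<noteq> {}" "a \<in> verts G1"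
  then have "(\<lambda>x. gdist J (Inl a) (Inr x)) ` S = (\<lambda>x. 1) ` S" by (intro image_cong) (auto simp: gJ_lr)
  also have "\<dots> = {1}" using \<open>S \<noteq> {}\<close> by auto
  finally have "(\<lambda>x. gdist J (Inl a) (Inr x)) ` S = {1}" .
  then show ?thesis unfolding set_dist_def image_image by simp
qed
lemma sd_rl: "S \<subseteq> verts G1 \<Longrightarrow> S \<noteq> {} \<Longrightarrow> a \<in> verts G2 \<Longrightarrow> set_dist J (Inr a) (Inl ` S) = 1"
proof -
  assume "S \<subseteq> verts G1" "S \<noteq> {}" "a \<in> verts G2"
  then have "(\<lambda>x. gdist J (Inr a) (Inl x)) ` S = (\<lambda>x. 1) ` S" by (intro image_cong) (auto simp: gJ_rl)
  also have "\<dots> = {1}" using \<open>S \<noteq> {}\<close> by auto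
  finally have "(\<lambda>x. gdist J (Inr a) (Inl x)) ` S = {1}" .
  then show ?thesis unfolding set_dist_def image_image by simp
qed

lemma cc_join: "color_class J f i = Inl ` {a \<in> verts G1. f (Inl a) = i} \<union> Inr ` {b \<in> verts G2. f (Inr b) = i}"
  by (auto simp: color_class_def vJ)

lemma cc_sub: "color_class G f i \<subseteq> verts G" by (auto simp: color_class_def)


lemma upper:
  assumes l1: "locating_coloring G1 k1 f1" and l2: "locating_coloring G2 k2 f2"
  shows "locating_coloring J (k1+k2) (case_sum f1 (\<lambda>b. k1 + f2 b))"
proof -
  define f where "f = case_sum f1 (\<lambda>b. k1 + f2 b)"
  have p1: "f1 ` verts G1 = {1..k1}" and q1: "\<forall>u\<in>verts G1. \<forall>v\<in>verts G1. adj G1 u v \<longrightarrow> f1 u \<noteq> f1 v"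
    and i1: "inj_on (color_code G1 k1 f1) (verts G1)"
    using l1 by (auto simp: locating_coloring_def proper_coloring_def)
  have p2: "f2 ` verts G2 = {1..k2}" and q2: "\<forall>u\<in>verts G2. \<forall>v\<in>verts G2. adj G2 u v \<longrightarrow> f2 u \<noteq> f2 v"
    and i2: "inj_on (color_code G2 k2 f2) (verts G2)"
    using l2 by (auto simp: locating_coloring_def proper_coloring_def)
  have r1: "a \<in> verts G1 \<Longrightarrow> 1 \<le> f1 a \<and> f1 a \<le> k1" for a using p1 by auto
  have r2: "b \<in> verts G2 \<Longrightarrow> 1 \<le> f2 b \<and> f2 b \<le> k2" for b using p2 by auto
  have img: "f ` verts J = {1..k1+k2}"
  proof -
    have "f ` verts J = f1 ` verts G1 \<union> (plus k1) ` (f2 ` verts G2)"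
      unfolding vJ f_def image_Un image_image by simp
    also have "\<dots> = {1..k1+k2}" using p1 p2 by (auto simp: add.commute)
    finally show ?thesis .
  qed
  have prp: "\<forall>u\<in>verts J. \<forall>v\<in>verts J. adj J u v \<longrightarrow> f u \<noteq> f v"
  proof (intro ballI impI)
    fix u v assume u: "u \<in> verts J" and v: "v \<in> verts J" and a: "adj J u v"
    show "f u \<noteq> f v"
    proof (cases u; cases v)
      fix p q assume "u = Inl p" "v = Inl q" then show ?thesis using u v a q1 by (auto simp: vJ f_def)
    next
      fix p q assume "u = Inl p" "v = Inr q" then show ?thesis using u v r1[of p] r2[of q] by (auto simp: vJ f_def)
    next
      fix p q assume "u = Inr p" "v = Inl q" then show ?thesis using u v r1[of q] r2[of p] by (auto simp: vJ f_def)
    next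
      fix p q assume "u = Inr p" "v = Inr q" then show ?thesis using u v a q2 by (auto simp: vJ f_def)
    qed
  qed
  have ccl: "color_class J f i = Inl ` color_class G1 f1 i" if "i \<in> {1..k1}" for i
    using that r2 unfolding cc_join by (force simp: f_def color_class_def)
  have ccr: "color_class J f (k1+j) = Inr ` color_class G2 f2 j" if "j \<in> {1..k2}" for j
    using that r1 unfolding cc_join by (fastforce simp: f_def color_class_def)
  have ne1: "a \<in> color_class G1 f1 (f1 a)" if "a \<in> verts G1" for a using that by (simp add: color_class_def)
  have ne2: "a \<in> color_class G2 f2 (f2 a)" if "a \<in> verts G2" for a using that by (simp add: color_class_def)
  have inj: "inj_on (color_code J (k1+k2) f) (verts J)"
  proof (rule inj_onI)
    fix x y assume x: "x \<in> verts J" and y: "y \<in> verts J" and e: "color_code J (k1+k2) f x = color_code J (k1+k2) f y"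
    then have E: "\<And>i. i \<in> {1..k1+k2} \<Longrightarrow> set_dist J x (color_class J f i) = set_dist J y (color_class J f i)"
      using code_eq by metis
    show "x = y"
    proof (cases x; cases y)
      fix a b assume xa: "x = Inl a" and yb: "y = Inl b"
      then have a: "a \<in> verts G1" and b: "b \<in> verts G1" using x y by (auto simp: vJ)
      have "\<forall>i\<in>{1..k1}. set_dist G1 a (color_class G1 f1 i) = set_dist G1 b (color_class G1 f1 i)"
      proof
        fix i assume i: "i \<in> {1..k1}"
        then have "set_dist J x (color_class J f i) = set_dist J y (color_class J f i)" by (intro E) auto
        then show "set_dist G1 a (color_class G1 f1 i) = set_dist G1 b (color_class G1 f1 i)"
          using ccl[OF i] xa yb sd_ll[OF cc_sub a] sd_ll[OF cc_sub b] by simp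
      qed
      then have "a = b" using i1 a b code_eq by (metis inj_onD)
      then show ?thesis using xa yb by simp
    next
      fix a b assume xa: "x = Inr a" and yb: "y = Inr b"
      then have a: "a \<in> verts G2" and b: "b \<in> verts G2" using x y by (auto simp: vJ)
      have "\<forall>i\<in>{1..k2}. set_dist G2 a (color_class G2 f2 i) = set_dist G2 b (color_class G2 f2 i)"
      proof
        fix i assume i: "i \<in> {1..k2}"
        then have "set_dist J x (color_class J f (k1+i)) = set_dist J y (color_class J f (k1+i))" by (intro E) auto
        then show "set_dist G2 a (color_class G2 f2 i) = set_dist G2 b (color_class G2 f2 i)"
          using ccr[OF i] xa yb sd_rr[OF cc_sub a] sd_rr[OF cc_sub b] by simp
      qed
      then have "a = b" using i2 a b code_eq by (metis inj_onD)
      then show ?thesis using xa yb by simp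
    next
      fix a b assume xa: "x = Inl a" and yb: "y = Inr b"
      then have a: "a \<in> verts G1" and b: "b \<in> verts G2" using x y by (auto simp: vJ)
      have i: "f1 a \<in> {1..k1}" using r1[OF a] by simp
      have "set_dist J x (color_class J f (f1 a)) = set_dist J y (color_class J f (f1 a))"
        using i by (intro E) auto
      moreover have "set_dist J x (color_class J f (f1 a)) = 0"
        using ccl[OF i] xa sd_ll[OF cc_sub a] set_dist_self[OF finite_subset[OF cc_sub fin1] ne1[OF a]]
          gd1[OF a a] by (simp add: dd_def)
      moreover have "set_dist J y (color_class J f (f1 a)) = 1"
        using ccl[OF i] yb sd_rl[OF cc_sub _ b] ne1[OF a] by auto
      ultimately show ?thesis by simp
    next
      fix a b assume xa: "x = Inr a" and yb: "y = Inl b"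
      then have a: "a \<in> verts G2" and b: "b \<in> verts G1" using x y by (auto simp: vJ)
      have i: "f1 b \<in> {1..k1}" using r1[OF b] by simp
      have "set_dist J x (color_class J f (f1 b)) = set_dist J y (color_class J f (f1 b))"
        using i by (intro E) auto
      moreover have "set_dist J y (color_class J f (f1 b)) = 0"
        using ccl[OF i] yb sd_ll[OF cc_sub b] set_dist_self[OF finite_subset[OF cc_sub fin1] ne1[OF b]]
          gd1[OF b b] by (simp add: dd_def)
      moreover have "set_dist J x (color_class J f (f1 b)) = 1"
        using ccl[OF i] xa sd_rl[OF cc_sub _ a] ne1[OF b] by auto
      ultimately show ?thesis by simp
    qed
  qed
  show ?thesis using img prp inj unfolding locating_coloring_def proper_coloring_def f_def by blast
qed


lemma lowerL:
  assumes l: "locating_coloring J k f"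
  shows "locating_chromatic_number G1 \<le> card (f ` Inl ` verts G1)"
proof -
  define C1 where "C1 = f ` Inl ` verts G1"
  define C2 where "C2 = f ` Inr ` verts G2"
  have pJ: "f ` verts J = {1..k}" and qJ: "\<forall>u\<in>verts J. \<forall>v\<in>verts J. adj J u v \<longrightarrow> f u \<noteq> f v"
    and iJ: "inj_on (color_code J k f) (verts J)"
    using l by (auto simp: locating_coloring_def proper_coloring_def)
  have disj: "C1 \<inter> C2 = {}"
  proof (rule ccontr)
    assume "C1 \<inter> C2 \<noteq> {}"
    then obtain a b where a: "a \<in> verts G1" and b: "b \<in> verts G2" and e: "f (Inl a) = f (Inr b)"
      unfolding C1_def C2_def by auto
    have "adj J (Inl a) (Inr b)" using a b by simp
    then show False using qJ a b e by (auto simp: vJ)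
  qed
  have un: "C1 \<union> C2 = {1..k}" using pJ unfolding C1_def C2_def vJ image_Un by (metis Un_commute)
  have fC: "finite C1" unfolding C1_def using fin1 by simp
  obtain h where h: "bij_betw h C1 {0..<card C1}" using ex_bij_betw_finite_nat[OF fC] by blast
  have hinj: "inj_on h C1" and himg: "h ` C1 = {0..<card C1}" using h by (auto simp: bij_betw_def)
  define g where "g = (\<lambda>a. Suc (h (f (Inl a))))"
  have inC1: "a \<in> verts G1 \<Longrightarrow> f (Inl a) \<in> C1" for a unfolding C1_def by simp
  have img: "g ` verts G1 = {1..card C1}"
  proof -
    have "g ` verts G1 = Suc ` (h ` C1)" unfolding g_def C1_def image_image by simp
    also have "\<dots> = {1..card C1}" using himg by (simp add: atLeastLessThanSuc_atLeastAtMost)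
    finally show ?thesis .
  qed
  have prp: "\<forall>u\<in>verts G1. \<forall>v\<in>verts G1. adj G1 u v \<longrightarrow> g u \<noteq> g v"
  proof (intro ballI impI)
    fix u v assume u: "u \<in> verts G1" and v: "v \<in> verts G1" and a: "adj G1 u v"
    then have "f (Inl u) \<noteq> f (Inl v)" using qJ by (auto simp: vJ)
    then show "g u \<noteq> g v" unfolding g_def using hinj inC1[OF u] inC1[OF v] by (auto dest: inj_onD)
  qed
  have cc1: "color_class J f i = Inl ` color_class G1 g (Suc (h i))" if i: "i \<in> C1" for i
  proof -
    have "{b \<in> verts G2. f (Inr b) = i} = {}" using i disj unfolding C2_def by auto
    moreover have "{a \<in> verts G1. f (Inl a) = i} = color_class G1 g (Suc (h i))"
      unfolding color_class_def g_def using hinj i inC1 by (auto dest: inj_onD)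
    ultimately show ?thesis unfolding cc_join by (metis Un_empty_right image_empty)
  qed
  have cc2: "color_class J f i = Inr ` {b \<in> verts G2. f (Inr b) = i}" and
    ne: "{b \<in> verts G2. f (Inr b) = i} \<noteq> {}" if i: "i \<in> {1..k}" "i \<notin> C1" for i
  proof -
    have "{a \<in> verts G1. f (Inl a) = i} = {}" using i unfolding C1_def by auto
    then show "color_class J f i = Inr ` {b \<in> verts G2. f (Inr b) = i}" unfolding cc_join by (metis Un_empty_left image_empty)
    have "i \<in> C2" using i un by auto
    then show "{b \<in> verts G2. f (Inr b) = i} \<noteq> {}" unfolding C2_def by auto
  qed
  have inj: "inj_on (color_code G1 (card C1) g) (verts G1)"
  proof (rule inj_onI)
    fix a b assume a: "a \<in> verts G1" and b: "b \<in> verts G1"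
      and e: "color_code G1 (card C1) g a = color_code G1 (card C1) g b"
    then have E: "\<And>j. j \<in> {1..card C1} \<Longrightarrow> set_dist G1 a (color_class G1 g j) = set_dist G1 b (color_class G1 g j)"
      using code_eq by metis
    have "\<forall>i\<in>{1..k}. set_dist J (Inl a) (color_class J f i) = set_dist J (Inl b) (color_class J f i)"
    proof
      fix i assume i: "i \<in> {1..k}"
      show "set_dist J (Inl a) (color_class J f i) = set_dist J (Inl b) (color_class J f i)"
      proof (cases "i \<in> C1")
        case True
        have "h i \<in> {0..<card C1}" using himg True by blast
        then have j: "Suc (h i) \<in> {1..card C1}" by simp
        show ?thesis using cc1[OF True] sd_ll[OF cc_sub a] sd_ll[OF cc_sub b] E[OF j] by simp
      next
        case False
        have sub: "{b \<in> verts G2. f (Inr b) = i} \<subseteq> verts G2" by auto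
        show ?thesis using cc2[OF i False] sd_lr[OF sub ne[OF i False] a] sd_lr[OF sub ne[OF i False] b] by simp
      qed
    qed
    then have "color_code J k f (Inl a) = color_code J k f (Inl b)" using code_eq by metis
    then have "Inl a = (Inl b :: 'a + 'b)" using iJ a b by (auto simp: vJ dest: inj_onD)
    then show "a = b" by simp
  qed
  have "locating_coloring G1 (card C1) g"
    using img prp inj unfolding locating_coloring_def proper_coloring_def by blast
  then show ?thesis unfolding C1_def locating_chromatic_number_def by (intro Least_le) blast
qed

lemma lowerR:
  assumes l: "locating_coloring J k f"
  shows "locating_chromatic_number G2 \<le> card (f ` Inr ` verts G2)"
proof -
  define C2 where "C2 = f ` Inr ` verts G2"
  define C1 where "C1 = f ` Inl ` verts G1"
  have pJ: "f ` verts J = {1..k}" and qJ: "\<forall>u\<in>verts J. \<forall>v\<in>verts J. adj J u v \<longrightarrow> f u \<noteq> f v"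
    and iJ: "inj_on (color_code J k f) (verts J)"
    using l by (auto simp: locating_coloring_def proper_coloring_def)
  have disj: "C2 \<inter> C1 = {}"
  proof (rule ccontr)
    assume "C2 \<inter> C1 \<noteq> {}"
    then obtain a b where a: "a \<in> verts G2" and b: "b \<in> verts G1" and e: "f (Inr a) = f (Inl b)"
      unfolding C2_def C1_def by auto
    have "adj J (Inr a) (Inl b)" using a b by simp
    then show False using qJ a b e by (auto simp: vJ)
  qed
  have un: "C2 \<union> C1 = {1..k}" using pJ unfolding C2_def C1_def vJ image_Un by (metis Un_commute)
  have fC: "finite C2" unfolding C2_def using fin2 by simp
  obtain h where h: "bij_betw h C2 {0..<card C2}" using ex_bij_betw_finite_nat[OF fC] by blast
  have hinj: "inj_on h C2" and himg: "h ` C2 = {0..<card C2}" using h by (auto simp: bij_betw_def)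
  define g where "g = (\<lambda>a. Suc (h (f (Inr a))))"
  have inC2: "a \<in> verts G2 \<Longrightarrow> f (Inr a) \<in> C2" for a unfolding C2_def by simp
  have img: "g ` verts G2 = {1..card C2}"
  proof -
    have "g ` verts G2 = Suc ` (h ` C2)" unfolding g_def C2_def image_image by simp
    also have "\<dots> = {1..card C2}" using himg by (simp add: atLeastLessThanSuc_atLeastAtMost)
    finally show ?thesis .
  qed
  have prp: "\<forall>u\<in>verts G2. \<forall>v\<in>verts G2. adj G2 u v \<longrightarrow> g u \<noteq> g v"
  proof (intro ballI impI)
    fix u v assume u: "u \<in> verts G2" and v: "v \<in> verts G2" and a: "adj G2 u v"
    then have "f (Inr u) \<noteq> f (Inr v)" using qJ by (auto simp: vJ)
    then show "g u \<noteq> g v" unfolding g_def using hinj inC2[OF u] inC2[OF v] by (auto dest: inj_onD)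
  qed
  have cc2: "color_class J f i = Inr ` color_class G2 g (Suc (h i))" if i: "i \<in> C2" for i
  proof -
    have "{b \<in> verts G1. f (Inl b) = i} = {}" using i disj unfolding C1_def by auto
    moreover have "{a \<in> verts G2. f (Inr a) = i} = color_class G2 g (Suc (h i))"
      unfolding color_class_def g_def using hinj i inC2 by (auto dest: inj_onD)
    ultimately show ?thesis unfolding cc_join by (metis Un_empty_left image_empty)
  qed
  have cc1: "color_class J f i = Inl ` {b \<in> verts G1. f (Inl b) = i}" and
    ne: "{b \<in> verts G1. f (Inl b) = i} \<noteq> {}" if i: "i \<in> {1..k}" "i \<notin> C2" for i
  proof -
    have "{a \<in> verts G2. f (Inr a) = i} = {}" using i unfolding C2_def by auto
    then show "color_class J f i = Inl ` {b \<in> verts G1. f (Inl b) = i}" unfolding cc_join by (metis Un_empty_right image_empty)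
    have "i \<in> C1" using i un by auto
    then show "{b \<in> verts G1. f (Inl b) = i} \<noteq> {}" unfolding C1_def by auto
  qed
  have inj: "inj_on (color_code G2 (card C2) g) (verts G2)"
  proof (rule inj_onI)
    fix a b assume a: "a \<in> verts G2" and b: "b \<in> verts G2"
      and e: "color_code G2 (card C2) g a = color_code G2 (card C2) g b"
    then have E: "\<And>j. j \<in> {1..card C2} \<Longrightarrow> set_dist G2 a (color_class G2 g j) = set_dist G2 b (color_class G2 g j)"
      using code_eq by metis
    have "\<forall>i\<in>{1..k}. set_dist J (Inr a) (color_class J f i) = set_dist J (Inr b) (color_class J f i)"
    proof
      fix i assume i: "i \<in> {1..k}"
      show "set_dist J (Inr a) (color_class J f i) = set_dist J (Inr b) (color_class J f i)"
      proof (cases "i \<in> C2")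
        case True
        have "h i \<in> {0..<card C2}" using himg True by blast
        then have j: "Suc (h i) \<in> {1..card C2}" by simp
        show ?thesis using cc2[OF True] sd_rr[OF cc_sub a] sd_rr[OF cc_sub b] E[OF j] by simp
      next
        case False
        have sub: "{b \<in> verts G1. f (Inl b) = i} \<subseteq> verts G1" by auto
        show ?thesis using cc1[OF i False] sd_rl[OF sub ne[OF i False] a] sd_rl[OF sub ne[OF i False] b] by simp
      qed
    qed
    then have "color_code J k f (Inr a) = color_code J k f (Inr b)" using code_eq by metis
    then have "Inr a = (Inr b :: 'a + 'b)" using iJ a b by (auto simp: vJ dest: inj_onD)
    then show "a = b" by simp
  qed
  have "locating_coloring G2 (card C2) g"
    using img prp inj unfolding locating_coloring_def proper_coloring_def by blast
  then show ?thesis unfolding C2_def locating_chromatic_number_def by (intro Least_le) blast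
qed

lemma card_split:
  assumes l: "locating_coloring J k f"
  shows "card (f ` Inl ` verts G1) + card (f ` Inr ` verts G2) = k"
proof -
  have pJ: "f ` verts J = {1..k}" and qJ: "\<forall>u\<in>verts J. \<forall>v\<in>verts J. adj J u v \<longrightarrow> f u \<noteq> f v"
    using l by (auto simp: locating_coloring_def proper_coloring_def)
  have disj: "f ` Inl ` verts G1 \<inter> f ` Inr ` verts G2 = {}"
  proof (rule ccontr)
    assume "f ` Inl ` verts G1 \<inter> f ` Inr ` verts G2 \<noteq> {}"
    then obtain a b where a: "a \<in> verts G1" and b: "b \<in> verts G2" and e: "f (Inl a) = f (Inr b)"
      by auto
    have "adj J (Inl a) (Inr b)" using a b by simp
    then show False using qJ a b e by (auto simp: vJ)
  qed
  have "card (f ` Inl ` verts G1 \<union> f ` Inr ` verts G2) = k"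
    using pJ unfolding vJ image_Un by simp
  then show ?thesis using card_Un_disjoint[OF _ _ disj] fin1 fin2 by simp
qed
end

theorem corollary1:
  fixes G1 :: "'a graph" and G2 :: "'b graph"
  assumes "simple_graph G1" and "simple_graph G2"
    and "connected_graph G1" and "connected_graph G2"
    and "diameter G1 \<le> 2" and "diameter G2 \<le> 2"
  shows "locating_chromatic_number (graph_join G1 G2)
         = locating_chromatic_number G1 + locating_chromatic_number G2"
proof -
  interpret jn G1 G2 using assms by (unfold_locales) auto
  have irr1: "\<forall>u. \<not> adj G1 u u" using assms(1) by (simp add: simple_graph_def)
  have irr2: "\<forall>u. \<not> adj G2 u u" using assms(2) by (simp add: simple_graph_def)
  have "\<exists>k f. locating_coloring G1 k f"
    by (rule exists_loc[OF fin1 irr1]) (simp add: gd1 dd_def)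
  then have "\<exists>f. locating_coloring G1 (LEAST k. \<exists>f. locating_coloring G1 k f) f" by (rule LeastI_ex)
  then obtain f1 where f1: "locating_coloring G1 (locating_chromatic_number G1) f1"
    unfolding locating_chromatic_number_def by blast
  have "\<exists>k f. locating_coloring G2 k f"
    by (rule exists_loc[OF fin2 irr2]) (simp add: gd2 dd_def)
  then have "\<exists>f. locating_coloring G2 (LEAST k. \<exists>f. locating_coloring G2 k f) f" by (rule LeastI_ex)
  then obtain f2 where f2: "locating_coloring G2 (locating_chromatic_number G2) f2"
    unfolding locating_chromatic_number_def by blast
  have U: "locating_coloring J (locating_chromatic_number G1 + locating_chromatic_number G2)
      (case_sum f1 (\<lambda>b. locating_chromatic_number G1 + f2 b))"
    by (rule upper[OF f1 f2])
  then have le: "locating_chromatic_number J \<le> locating_chromatic_number G1 + locating_chromatic_number G2"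
    unfolding locating_chromatic_number_def[of J] by (intro Least_le) blast
  have "\<exists>k f. locating_coloring J k f" using U by blast
  then have "\<exists>f. locating_coloring J (LEAST k. \<exists>f. locating_coloring J k f) f" by (rule LeastI_ex)
  then obtain f where f: "locating_coloring J (locating_chromatic_number J) f"
    unfolding locating_chromatic_number_def by blast
  have "locating_chromatic_number G1 + locating_chromatic_number G2 \<le> locating_chromatic_number J"
    using lowerL[OF f] lowerR[OF f] card_split[OF f] by linarith
  then show ?thesis using le by simp
qed

end
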